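(* Let $W_{el}:\mathbb R^{3\times3}\to[0,\infty]$ satisfy: there are a quadratic form $Q_{el}$ on $\mathbb R^{3\times3}$ and an increasing $r_{el}:[0,\infty)\to[0,\infty]$ with $\lim_{\delta\to0}r_{el}(\delta)=0$ and $|W_{el}(I+G)-Q_{el}(G)|\le|G|^2r_{el}(|G|)$ for all $G$. Let $\Omega\subset\mathbb R^3$ be bounded and measurable, let $(\Phi^h),(\Psi^h)\subset L^2(\Omega,\mathbb R^{3\times3})$ be bounded sequences, and let $\kappa:(0,\infty)\to(0,\infty)$ with $\kappa(h)\to0$ as $h\to0$. Then there exist measurable $O^h\subset\Omega$ with $|\Omega\setminus O^h|\to0$ and $\kappa(h)h^{-2}|\Omega\setminus O^h|\to0$, such that $\det(I+h\Psi^h(x))>0$ for all $x\in O^h$ and $$\lim_{h\to0}\Big|h^{-2}\int_{O^h}W_{el}\big((I+h\Phi^h)(I+h\Psi^h)^{-1}\big)-\int_{O^h}Q_{el}(\Phi^h-\Psi^h)\Big|=0.$$ *)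

theory Defs
  imports "HOL-Analysis.Analysis"
begin

definition quadratic_form :: "('a::real_vector \<Rightarrow> real) \<Rightarrow> bool" where
  "quadratic_form Q \<longleftrightarrow> (\<exists>B. bilinear B \<and> (\<forall>G. Q G = B G G))"

end

theory Submission imports Defs begin

lemma norm_sq_vec: "norm (x::'a::real_normed_vector^'n)^2 = (\<Sum>i\<in>UNIV. norm (x$i)^2)"
  by (simp add: norm_vec_def L2_set_def sum_nonneg)

lemma norm_sq_mat: "norm (X::real^'n^'m)^2 = (\<Sum>i\<in>UNIV. \<Sum>j\<in>UNIV. (X$i$j)^2)"
  by (simp add: norm_sq_vec)

lemma norm_mv: "norm ((X::real^'n^'m) *v v) \<le> norm X * norm v"
proof -
  have "norm (X *v v)^2 = (\<Sum>i\<in>UNIV. (inner (X$i) v)^2)"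
    by (simp add: norm_sq_vec matrix_vector_mul_component)
  also have "\<dots> \<le> (\<Sum>i\<in>UNIV. norm (X$i)^2 * norm v^2)"
  proof (rule sum_mono)
    fix i
    have "\<bar>inner (X$i) v\<bar> \<le> norm (X$i) * norm v" by (rule Cauchy_Schwarz_ineq2)
    then have "\<bar>inner (X$i) v\<bar>^2 \<le> (norm (X$i) * norm v)^2"
      by (rule power_mono) simp
    then show "(inner (X$i) v)^2 \<le> norm (X$i)^2 * norm v^2" by (simp add: power_mult_distrib)
  qed
  also have "\<dots> = (norm X * norm v)^2"
    by (simp add: norm_sq_vec power_mult_distrib sum_distrib_right)
  finally show ?thesis
    by (meson norm_ge_zero power2_le_imp_le zero_le_mult_iff)
qed

lemma norm_transpose: "norm (transpose (X::real^'n^'m)) = norm X"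
proof -
  have "norm (transpose X)^2 = (\<Sum>i\<in>UNIV. \<Sum>j\<in>UNIV. (X$j$i)^2)"
    unfolding norm_sq_mat transpose_def by simp
  also have "\<dots> = (\<Sum>j\<in>UNIV. \<Sum>i\<in>UNIV. (X$j$i)^2)" by (rule sum.swap)
  also have "\<dots> = norm X^2" by (simp add: norm_sq_mat)
  finally have "norm (transpose X)^2 = norm X^2" .
  then show ?thesis by (meson norm_ge_zero power2_eq_imp_eq)
qed

lemma row_mm: "((X::real^'n^'m) ** (Y::real^'p^'n)) $ i = transpose Y *v (X $ i)"
  unfolding vec_eq_iff matrix_matrix_mult_def matrix_vector_mult_def transpose_def
  by (simp add: mult.commute)

lemma norm_mm: "norm ((X::real^'n^'m) ** (Y::real^'p^'n)) \<le> norm X * norm Y"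
proof -
  have "norm (X ** Y)^2 = (\<Sum>i\<in>UNIV. norm ((X ** Y)$i)^2)" by (simp add: norm_sq_vec)
  also have "\<dots> \<le> (\<Sum>i\<in>UNIV. norm (X$i)^2 * norm Y^2)"
  proof (rule sum_mono)
    fix i
    have "norm ((X ** Y)$i) \<le> norm Y * norm (X$i)"
      unfolding row_mm using norm_mv[of "transpose Y" "X$i"] by (simp add: norm_transpose)
    then have "norm ((X ** Y)$i)^2 \<le> (norm Y * norm (X$i))^2"
      by (rule power_mono) simp
    then show "norm ((X ** Y)$i)^2 \<le> norm (X$i)^2 * norm Y^2" by (simp add: power_mult_distrib mult.commute)
  qed
  also have "\<dots> = (norm X * norm Y)^2"
    by (simp add: norm_sq_vec power_mult_distrib sum_distrib_right)
  finally show ?thesis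
    by (meson norm_ge_zero power2_le_imp_le zero_le_mult_iff)
qed

lemma norm_mat1: "norm (mat 1 :: real^3^3) \<le> 2"
proof -
  have "norm (mat 1 :: real^3^3)^2 = 3"
  proof -
    have e: "(if i = j then 1 else 0)^2 = (if i = j then 1 else (0::real))" for i j :: 3 by simp
    show ?thesis unfolding norm_sq_mat mat_def by (simp add: e)
  qed
  then have "norm (mat 1 :: real^3^3)^2 \<le> 2^2" by simp
  then show ?thesis
    by (rule power2_le_imp_le) simp
qed

lemma matrix_diff_rdistrib: "((A::real^'n^'m) - B) ** C = A ** C - B ** C"
  by (simp add: matrix_matrix_mult_def vec_eq_iff algebra_simps sum_subtractf)

lemma matrix_add_rdistrib': "((A::real^'n^'m) + B) ** C = A ** C + B ** C"
  by (simp add: matrix_matrix_mult_def vec_eq_iff algebra_simps sum.distrib)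

lemma matrix_diff_ldistrib: "(C::real^'n^'m) ** (A - B) = C ** A - C ** B"
  by (simp add: matrix_matrix_mult_def vec_eq_iff algebra_simps sum_subtractf)

lemma inv_I_plus:
  assumes "norm (B::real^'n^'n) < 1"
  shows "invertible (mat 1 + B)"
proof -
  have "\<forall>x. (mat 1 + B) *v x = 0 \<longrightarrow> x = 0"
  proof (intro allI impI)
    fix x assume "(mat 1 + B) *v x = 0"
    then have "x = - (B *v x)"
      by (simp add: matrix_vector_mult_add_rdistrib eq_neg_iff_add_eq_0)
    then have "norm x \<le> norm B * norm x" using norm_mv[of B x] by (metis norm_minus_cancel)
    then have "(1 - norm B) * norm x \<le> 0" by (simp add: algebra_simps)
    moreover have "1 - norm B > 0" using assms by simp
    ultimately have "norm x \<le> 0"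
      by (simp add: mult_le_0_iff)
    then show "x = 0" by simp
  qed
  then obtain C :: "real^'n^'n" where "C ** (mat 1 + B) = mat 1"
    using matrix_left_invertible_ker[of "mat 1 + B"] by blast
  then show ?thesis
    unfolding invertible_left_inverse by blast
qed

lemma matrix_inv_props:
  assumes "invertible (A::real^'n^'n)"
  shows "A ** matrix_inv A = mat 1" "matrix_inv A ** A = mat 1"
proof -
  have "\<exists>A'. A ** A' = mat 1 \<and> A' ** A = mat 1" using assms invertible_def by blast
  then have "A ** matrix_inv A = mat 1 \<and> matrix_inv A ** A = mat 1"
    unfolding matrix_inv_def by (rule someI_ex)
  then show "A ** matrix_inv A = mat 1" "matrix_inv A ** A = mat 1" by auto
qed

lemma det_I_plus_pos:
  assumes "norm (B::real^'n^'n) < 1"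
  shows "det (mat 1 + B) > 0"
proof (rule ccontr)
  assume "\<not> ?thesis"
  then have le: "det (mat 1 + 1 *\<^sub>R B) \<le> 0" by simp
  have cont: "continuous_on {0..1} (\<lambda>t::real. det (mat 1 + t *\<^sub>R B))"
    unfolding det_def by (intro continuous_intros)
  have "det (mat 1 + 0 *\<^sub>R B) = 1" by simp
  then have le0: "0 \<le> det (mat 1 + 0 *\<^sub>R B)" by simp
  obtain t where t: "0 \<le> t" "t \<le> 1" "det (mat 1 + t *\<^sub>R B) = 0"
    using IVT2'[of "\<lambda>t. det (mat 1 + t *\<^sub>R B)" 1 0 0, OF le le0 _ cont] by auto
  have "norm (t *\<^sub>R B) = t * norm B" using t by simp
  also have "\<dots> \<le> 1 * norm B" by (rule mult_right_mono) (use t in auto)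
  finally have "norm (t *\<^sub>R B) < 1" using assms by simp
  then have "invertible (mat 1 + t *\<^sub>R B)" by (rule inv_I_plus)
  then show False using t(3) invertible_det_nz by blast
qed

lemma key_matrix:
  fixes A B :: "real^'n^'n" and Bf :: "real^'n^'n \<Rightarrow> real^'n^'n \<Rightarrow> real"
  assumes bil: "bilinear Bf" and K: "\<And>x y. norm (Bf x y) \<le> K * norm x * norm y" and K0: "K > 0"
    and I2: "norm (mat 1 :: real^'n^'n) \<le> 2"
    and nA: "norm A \<le> 1/2" and nB: "norm B \<le> 1/2"
  defines "M \<equiv> matrix_inv (mat 1 + B)"
  shows "(mat 1 + A) ** M = mat 1 + (A - B) ** M"
    and "norm ((A - B) ** M) \<le> 4 * norm (A - B)"
    and "\<bar>Bf ((A - B) ** M) ((A - B) ** M) - Bf (A - B) (A - B)\<bar> \<le> 16 * K * norm (A - B)^2 * norm B"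
proof -
  have inv: "invertible (mat 1 + B)" using nB by (intro inv_I_plus) simp
  have MM: "(mat 1 + B) ** M = mat 1" using matrix_inv_props(1)[OF inv] by (simp add: M_def)
  then have Meq: "M = mat 1 - B ** M" by (simp add: matrix_add_rdistrib' algebra_simps)
  show "(mat 1 + A) ** M = mat 1 + (A - B) ** M"
    using Meq by (simp add: matrix_add_rdistrib' matrix_diff_rdistrib algebra_simps)
  have "norm M \<le> 2 + norm B * norm M"
    using Meq I2 norm_mm[of B M] norm_triangle_ineq4[of "mat 1" "B ** M"] by simp
  then have h1: "(1 - norm B) * norm M \<le> 2" by (simp add: algebra_simps)
  have "(1/2) * norm M \<le> (1 - norm B) * norm M"
    by (rule mult_right_mono) (use nB in auto)
  with h1 have nM: "norm M \<le> 4" by linarith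
  define X where "X = A - B"
  define D where "D = X ** M - X"
  have Deq: "D = - (X ** (B ** M))"
  proof -
    have "D = X ** M - X ** mat 1" by (simp add: D_def)
    also have "\<dots> = X ** (M - mat 1)" by (simp add: matrix_diff_ldistrib)
    also have "M - mat 1 = - (B ** M)" using Meq by (simp add: algebra_simps)
    also have "X ** (- (B ** M)) = - (X ** (B ** M))"
      using matrix_diff_ldistrib[of X 0 "B ** M"] by simp
    finally show ?thesis .
  qed
  have "norm D \<le> norm X * norm (B ** M)"
    unfolding Deq norm_minus_cancel by (rule norm_mm)
  also have "\<dots> \<le> norm X * (norm B * norm M)"
    by (intro mult_left_mono norm_mm) auto
  also have "\<dots> \<le> norm X * (norm B * 4)"
    by (intro mult_left_mono nM) auto
  finally have nD: "norm D \<le> 4 * norm X * norm B" by simp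
  have "4 * norm X * norm B \<le> 4 * norm X * (1/2)"
    by (intro mult_left_mono nB) auto
  then have h2: "4 * norm X * norm B \<le> 2 * norm X" by simp
  have nD2: "norm D \<le> 2 * norm X" using order.trans[OF nD h2] .
  have "norm ((A - B) ** M) \<le> norm (A - B) * norm M" by (rule norm_mm)
  also have "\<dots> \<le> norm (A - B) * 4" by (intro mult_left_mono nM) auto
  finally show "norm ((A - B) ** M) \<le> 4 * norm (A - B)" by simp
  have XM: "X ** M = X + D" by (simp add: D_def)
  have "Bf (X + D) (X + D) - Bf X X = Bf X D + Bf D X + Bf D D"
    using bil by (simp add: bilinear_ladd bilinear_radd)
  then have "\<bar>Bf (X ** M) (X ** M) - Bf X X\<bar> \<le> \<bar>Bf X D\<bar> + \<bar>Bf D X\<bar> + \<bar>Bf D D\<bar>"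
    unfolding XM by linarith
  also have "\<dots> \<le> K * norm X * norm D + K * norm D * norm X + K * norm D * norm D"
    using K[of X D] K[of D X] K[of D D] unfolding real_norm_def by (intro add_mono)
  also have "\<dots> \<le> 4 * K * norm X * norm D"
  proof -
    have "K * norm D * norm D \<le> K * norm D * (2 * norm X)"
      by (intro mult_left_mono nD2) (use K0 in auto)
    then show ?thesis by (simp add: algebra_simps)
  qed
  also have "\<dots> \<le> 4 * K * norm X * (4 * norm X * norm B)"
    by (intro mult_left_mono nD) (use K0 in auto)
  also have "\<dots> = 16 * K * norm X^2 * norm B" by (simp add: power2_eq_square algebra_simps)
  finally show "\<bar>Bf ((A - B) ** M) ((A - B) ** M) - Bf (A - B) (A - B)\<bar> \<le> 16 * K * norm (A - B)^2 * norm B"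
    by (simp add: X_def)
qed

lemma pointwise:
  fixes W :: "real^3^3 \<Rightarrow> ereal" and r :: "real \<Rightarrow> ereal"
    and A B :: "real^3^3" and Bf :: "real^3^3 \<Rightarrow> real^3^3 \<Rightarrow> real"
  assumes W_nonneg: "\<And>F. W F \<ge> 0"
    and r_mono: "mono_on {0..} r"
    and W_Q: "\<And>G. \<bar>W (mat 1 + G) - ereal (Bf G G)\<bar> \<le> ereal ((norm G)^2) * r (norm G)"
    and bil: "bilinear Bf" and K: "\<And>x y. norm (Bf x y) \<le> K * norm x * norm y" and K0: "K > 0"
    and S: "(norm A)^2 + (norm B)^2 \<le> d" and d4: "d \<le> 1/4"
    and rho: "r (6 * sqrt d) = ereal \<rho>" and rho0: "\<rho> \<ge> 0"
  shows "\<exists>w. W ((mat 1 + A) ** matrix_inv (mat 1 + B)) = ereal w \<and>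
           \<bar>w - Bf (A - B) (A - B)\<bar> \<le> 32 * (\<rho> + K * sqrt d) * ((norm A)^2 + (norm B)^2)"
proof -
  define Sm where "Sm = (norm A)^2 + (norm B)^2"
  have a0: "0 \<le> (norm A)^2" "0 \<le> (norm B)^2" by simp_all
  have d0: "0 \<le> d" using S a0 by linarith
  have q: "(1/2::real)^2 = 1/4" by (simp add: power2_eq_square)
  have "(norm A)^2 \<le> (1/2)^2" unfolding q using S d4 a0 by linarith
  then have nA: "norm A \<le> 1/2" by (rule power2_le_imp_le) simp
  have "(norm B)^2 \<le> (1/2)^2" unfolding q using S d4 a0 by linarith
  then have nB: "norm B \<le> 1/2" by (rule power2_le_imp_le) simp
  have sd: "(sqrt d)^2 = d" using d0 by simp
  have "(norm B)^2 \<le> (sqrt d)^2" unfolding sd using S a0 by linarith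
  then have nBd: "norm B \<le> sqrt d" by (rule power2_le_imp_le) (simp add: d0)
  define M where "M = matrix_inv (mat 1 + B)"
  define X where "X = A - B"
  define G where "G = X ** M"
  note km = key_matrix[OF bil K K0 norm_mat1 nA nB]
  have F: "(mat 1 + A) ** M = mat 1 + G" using km(1) by (simp add: M_def G_def X_def)
  have nG: "norm G \<le> 4 * norm X" using km(2) by (simp add: M_def G_def X_def)
  have QG: "\<bar>Bf G G - Bf X X\<bar> \<le> 16 * K * norm X^2 * norm B" using km(3) by (simp add: M_def G_def X_def)
  have X2: "norm X^2 \<le> 2 * Sm"
  proof -
    have "norm X \<le> norm A + norm B" unfolding X_def by (rule norm_triangle_ineq4)
    then have "norm X^2 \<le> (norm A + norm B)^2" by (rule power_mono) simp
    also have "\<dots> \<le> 2 * Sm"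
    proof -
      have "(norm A + norm B)^2 + (norm A - norm B)^2 = 2 * Sm"
        by (simp add: Sm_def power2_eq_square algebra_simps)
      then show ?thesis using zero_le_power2[of "norm A - norm B"] by linarith
    qed
    finally show ?thesis .
  qed
  have G2: "norm G^2 \<le> 32 * Sm"
  proof -
    have "norm G^2 \<le> (4 * norm X)^2" using nG by (rule power_mono) simp
    also have "\<dots> = 16 * norm X^2" by (simp add: power_mult_distrib)
    finally show ?thesis using X2 by linarith
  qed
  have "norm G^2 \<le> (6 * sqrt d)^2"
  proof -
    have e36: "(6 * sqrt d)^2 = 36 * d" using d0 by (simp add: power_mult_distrib)
    have s1: "32 * Sm \<le> 32 * d" using S unfolding Sm_def by simp
    have s2: "32 * d \<le> 36 * d" using d0 by simp
    have "norm G^2 \<le> 36 * d" using order.trans[OF G2 order.trans[OF s1 s2]] .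
    then show ?thesis unfolding e36 .
  qed
  then have nG6: "norm G \<le> 6 * sqrt d" by (rule power2_le_imp_le) (simp add: d0)
  have rG: "r (norm G) \<le> ereal \<rho>"
    using mono_onD[OF r_mono, of "norm G" "6 * sqrt d"] nG6 d0 rho by simp
  have bnd: "\<bar>W (mat 1 + G) - ereal (Bf G G)\<bar> \<le> ereal (norm G^2 * \<rho>)"
  proof -
    have "ereal (norm G^2) * r (norm G) \<le> ereal (norm G^2) * ereal \<rho>"
      by (rule ereal_mult_left_mono[OF rG]) simp
    then show ?thesis using W_Q[of G] by simp
  qed
  obtain w where w: "W (mat 1 + G) = ereal w"
  proof (cases "W (mat 1 + G)")
    case (real w) then show ?thesis using that by blast
  next
    case PInf then show ?thesis using bnd by simp
  next
    case MInf then show ?thesis using W_nonneg[of "mat 1 + G"] by simp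
  qed
  have w1: "\<bar>w - Bf G G\<bar> \<le> norm G^2 * \<rho>" using bnd w by simp
  have "norm G^2 * \<rho> \<le> (32 * Sm) * \<rho>" by (rule mult_right_mono[OF G2 rho0])
  with w1 have w2: "\<bar>w - Bf G G\<bar> \<le> 32 * Sm * \<rho>" by linarith
  have "16 * K * norm X^2 * norm B \<le> 16 * K * (2 * Sm) * sqrt d"
    by (intro mult_mono mult_left_mono X2 nBd) (use K0 in \<open>auto simp: Sm_def\<close>)
  also have "\<dots> = 32 * K * Sm * sqrt d" by simp
  finally have i1: "16 * K * norm X^2 * norm B \<le> 32 * K * Sm * sqrt d" .
  have w3: "\<bar>Bf G G - Bf X X\<bar> \<le> 32 * K * Sm * sqrt d" using order.trans[OF QG i1] .
  have sp: "w - Bf X X = (w - Bf G G) + (Bf G G - Bf X X)" by simp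
  have "\<bar>w - Bf X X\<bar> \<le> \<bar>w - Bf G G\<bar> + \<bar>Bf G G - Bf X X\<bar>"
    unfolding sp by (rule abs_triangle_ineq)
  also have "\<dots> \<le> 32 * Sm * \<rho> + 32 * K * Sm * sqrt d" by (rule add_mono[OF w2 w3])
  also have "\<dots> = 32 * (\<rho> + K * sqrt d) * Sm" by (simp add: algebra_simps)
  finally show ?thesis using w F unfolding Sm_def X_def M_def[symmetric] by auto
qed

lemma bil_meas:
  fixes Bf :: "real^3^3 \<Rightarrow> real^3^3 \<Rightarrow> real"
  assumes bil: "bilinear Bf" and f: "f \<in> borel_measurable M"
  shows "(\<lambda>x. Bf (f x) (f x)) \<in> borel_measurable M"
proof -
  have bb: "bounded_bilinear Bf" using bil bilinear_conv_bounded_bilinear by blast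
  have "continuous_on UNIV (\<lambda>G. Bf G G)"
    by (rule bounded_bilinear.continuous_on[OF bb]) (auto intro: continuous_intros)
  then have "(\<lambda>G. Bf G G) \<in> borel_measurable borel" by (rule borel_measurable_continuous_onI)
  from measurable_compose[OF f this] show ?thesis by simp
qed

lemma L2_integrable:
  fixes P :: "real^3 \<Rightarrow> real^3^3" and \<Phi> :: "real^3 \<Rightarrow> real^3^3"
  assumes Pm: "P \<in> borel_measurable lebesgue"
    and Pdef: "\<And>x. P x = indicator \<Omega> x *\<^sub>R \<Phi> x"
    and b: "(\<integral>\<^sup>+ x. ennreal ((norm (\<Phi> x))^2) * indicator \<Omega> x \<partial>lebesgue) \<le> ennreal C"
    and C0: "C \<ge> 0"
  shows "integrable lebesgue (\<lambda>x. (norm (P x))^2)" "(\<integral>x. (norm (P x))^2 \<partial>lebesgue) \<le> C"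
proof -
  have eq: "(\<integral>\<^sup>+ x. ennreal ((norm (P x))^2) \<partial>lebesgue) = (\<integral>\<^sup>+ x. ennreal ((norm (\<Phi> x))^2) * indicator \<Omega> x \<partial>lebesgue)"
    by (rule nn_integral_cong) (simp add: Pdef indicator_def)
  have m: "(\<lambda>x. (norm (P x))^2) \<in> borel_measurable lebesgue" using Pm by measurable
  have "(\<integral>\<^sup>+ x. ennreal (norm ((norm (P x))^2)) \<partial>lebesgue) < \<infinity>"
    using eq b by (simp add: le_less_trans)
  then show i: "integrable lebesgue (\<lambda>x. (norm (P x))^2)" by (rule integrableI_bounded[OF m])
  have "ennreal (\<integral>x. (norm (P x))^2 \<partial>lebesgue) = (\<integral>\<^sup>+ x. ennreal ((norm (P x))^2) \<partial>lebesgue)"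
    by (rule nn_integral_eq_integral[symmetric]) (use i in auto)
  also have "\<dots> \<le> ennreal C" using eq b by simp
  finally show "(\<integral>x. (norm (P x))^2 \<partial>lebesgue) \<le> C" using C0 by (simp add: ennreal_le_iff)
qed

lemma fixed_h:
  fixes W :: "real^3^3 \<Rightarrow> ereal" and r :: "real \<Rightarrow> ereal"
    and \<Omega> :: "(real^3) set" and \<Phi> \<Psi> :: "real^3 \<Rightarrow> real^3^3"
    and Bf :: "real^3^3 \<Rightarrow> real^3^3 \<Rightarrow> real"
  assumes W_nonneg: "\<And>F. W F \<ge> 0"
    and r_mono: "mono_on {0..} r"
    and W_Q: "\<And>G. \<bar>W (mat 1 + G) - ereal (Bf G G)\<bar> \<le> ereal ((norm G)^2) * r (norm G)"
    and bil: "bilinear Bf" and K: "\<And>x y. norm (Bf x y) \<le> K * norm x * norm y" and K0: "K > 0"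
    and \<Omega>_meas: "\<Omega> \<in> sets lebesgue"
    and \<Phi>_meas: "(\<lambda>x. indicator \<Omega> x *\<^sub>R \<Phi> x) \<in> borel_measurable lebesgue"
    and \<Psi>_meas: "(\<lambda>x. indicator \<Omega> x *\<^sub>R \<Psi> x) \<in> borel_measurable lebesgue"
    and \<Phi>_bdd: "(\<integral>\<^sup>+ x. ennreal ((norm (\<Phi> x))^2) * indicator \<Omega> x \<partial>lebesgue) \<le> ennreal C1"
    and \<Psi>_bdd: "(\<integral>\<^sup>+ x. ennreal ((norm (\<Psi> x))^2) * indicator \<Omega> x \<partial>lebesgue) \<le> ennreal C2"
    and C1: "C1 \<ge> 0" and C2: "C2 \<ge> 0"
    and h: "h > 0" and d0: "0 < d" and d4: "d \<le> 1/4"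
    and rho: "r (6 * sqrt d) = ereal \<rho>" and rho0: "\<rho> \<ge> 0"
    and O_def: "Oh = {x\<in>\<Omega>. h^2 * ((norm (\<Phi> x))^2 + (norm (\<Psi> x))^2) \<le> d}"
  shows "\<bar>ereal (1 / h^2) *
                   enn2ereal (\<integral>\<^sup>+ x. e2ennreal (W ((mat 1 + h *\<^sub>R \<Phi> x) **
                                   matrix_inv (mat 1 + h *\<^sub>R \<Psi> x))) * indicator Oh x \<partial>lebesgue)
                 - ereal (\<integral>x\<in>Oh. Bf (\<Phi> x - \<Psi> x) (\<Phi> x - \<Psi> x) \<partial>lebesgue)\<bar>
         \<le> ereal (32 * (\<rho> + K * sqrt d) * (C1 + C2))"
proof -
  define P where "P x = indicator \<Omega> x *\<^sub>R \<Phi> x" for x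
  define P' where "P' x = indicator \<Omega> x *\<^sub>R \<Psi> x" for x
  have Pm[measurable]: "P \<in> borel_measurable lebesgue" using \<Phi>_meas by (simp add: P_def[abs_def])
  have P'm[measurable]: "P' \<in> borel_measurable lebesgue" using \<Psi>_meas by (simp add: P'_def[abs_def])
  define s where "s x = (norm (P x))^2 + (norm (P' x))^2" for x
  define q where "q x = Bf (P x - P' x) (P x - P' x)" for x
  define E where "E = 32 * (\<rho> + K * sqrt d)"
  have E0: "E \<ge> 0" using rho0 K0 d0 by (simp add: E_def)
  have sm[measurable]: "s \<in> borel_measurable lebesgue" unfolding s_def[abs_def] by measurable
  have qm[measurable]: "q \<in> borel_measurable lebesgue" unfolding q_def[abs_def]
    by (rule bil_meas[OF bil]) measurable
  note LP = L2_integrable[OF Pm P_def \<Phi>_bdd C1]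
  note LP' = L2_integrable[OF P'm P'_def \<Psi>_bdd C2]
  have is_: "integrable lebesgue s" unfolding s_def[abs_def] using LP(1) LP'(1) by (rule Bochner_Integration.integrable_add)
  have Is_le: "(\<integral>x. s x \<partial>lebesgue) \<le> C1 + C2"
    unfolding s_def[abs_def] using LP LP' by (simp add: Bochner_Integration.integral_add)
  have s0: "s x \<ge> 0" for x by (simp add: s_def)
  have q_le: "\<bar>q x\<bar> \<le> 2 * K * s x" for x
  proof -
    have "\<bar>q x\<bar> \<le> K * norm (P x - P' x) * norm (P x - P' x)" using K[of "P x - P' x" "P x - P' x"] by (simp add: q_def)
    also have "\<dots> = K * (norm (P x - P' x))^2" by (simp add: power2_eq_square)
    also have "\<dots> \<le> K * (2 * s x)"
    proof (rule mult_left_mono)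
      have "norm (P x - P' x) \<le> norm (P x) + norm (P' x)" by (rule norm_triangle_ineq4)
      then have "(norm (P x - P' x))^2 \<le> (norm (P x) + norm (P' x))^2" by (rule power_mono) simp
      moreover have "(norm (P x) + norm (P' x))^2 + (norm (P x) - norm (P' x))^2 = 2 * s x"
        by (simp add: s_def power2_eq_square algebra_simps)
      ultimately show "(norm (P x - P' x))^2 \<le> 2 * s x" using zero_le_power2[of "norm (P x) - norm (P' x)"] by linarith
    qed (use K0 in simp)
    finally show ?thesis by simp
  qed
  have i2K: "integrable lebesgue (\<lambda>x. 2 * K * s x)" using is_ by simp
  have aeK: "AE x in lebesgue. norm (q x) \<le> norm (2 * K * s x)"
    using q_le s0 K0 by (simp add: abs_mult)
  have iq: "integrable lebesgue q" by (rule Bochner_Integration.integrable_bound[OF i2K qm aeK])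
  have O_eq: "Oh = \<Omega> \<inter> {x \<in> space lebesgue. h^2 * s x \<le> d}"
    unfolding O_def s_def P_def P'_def by (auto simp: indicator_def)
  have Om[measurable]: "Oh \<in> sets lebesgue" unfolding O_eq using \<Omega>_meas by measurable
  define Iq where "Iq = (\<integral>x. indicator Oh x * q x \<partial>lebesgue)"
  define Is where "Is = (\<integral>x. indicator Oh x * s x \<partial>lebesgue)"
  have iOq: "integrable lebesgue (\<lambda>x. indicator Oh x * q x)"
    using integrable_mult_indicator[OF Om iq] by simp
  have iOs: "integrable lebesgue (\<lambda>x. indicator Oh x * s x)"
    using integrable_mult_indicator[OF Om is_] by simp
  have Is_le2: "Is \<le> C1 + C2"
  proof -
    have "Is \<le> (\<integral>x. s x \<partial>lebesgue)" unfolding Is_def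
      by (rule integral_mono[OF iOs is_]) (auto simp: indicator_def s0)
    then show ?thesis using Is_le by linarith
  qed
  have Is0: "Is \<ge> 0" unfolding Is_def by (rule integral_nonneg_AE) (auto simp: indicator_def s0)
  have Iq_eq: "(\<integral>x\<in>Oh. Bf (\<Phi> x - \<Psi> x) (\<Phi> x - \<Psi> x) \<partial>lebesgue) = Iq"
    unfolding Iq_def set_lebesgue_integral_def
    by (rule Bochner_Integration.integral_cong) (auto simp: indicator_def O_def q_def P_def P'_def)
  define F where "F x = (mat 1 + h *\<^sub>R \<Phi> x) ** matrix_inv (mat 1 + h *\<^sub>R \<Psi> x)" for x
  have pw: "\<exists>w. W (F x) = ereal w \<and> h^2 * (q x - E * s x) \<le> w \<and> w \<le> h^2 * (q x + E * s x)"
    if xO: "x \<in> Oh" for x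
  proof -
    have xO': "x \<in> \<Omega>" and hx: "h^2 * ((norm (\<Phi> x))^2 + (norm (\<Psi> x))^2) \<le> d" using xO O_def by auto
    have PP: "P x = \<Phi> x" "P' x = \<Psi> x" using xO' by (auto simp: P_def P'_def)
    have S: "(norm (h *\<^sub>R \<Phi> x))^2 + (norm (h *\<^sub>R \<Psi> x))^2 \<le> d"
      using hx h by (simp add: power_mult_distrib algebra_simps)
    obtain w where w: "W (F x) = ereal w"
      and wb: "\<bar>w - Bf (h *\<^sub>R \<Phi> x - h *\<^sub>R \<Psi> x) (h *\<^sub>R \<Phi> x - h *\<^sub>R \<Psi> x)\<bar>
               \<le> 32 * (\<rho> + K * sqrt d) * ((norm (h *\<^sub>R \<Phi> x))^2 + (norm (h *\<^sub>R \<Psi> x))^2)"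
      using pointwise[OF W_nonneg r_mono W_Q bil K K0 S d4 rho rho0] unfolding F_def by blast
    have e1: "Bf (h *\<^sub>R \<Phi> x - h *\<^sub>R \<Psi> x) (h *\<^sub>R \<Phi> x - h *\<^sub>R \<Psi> x) = h^2 * q x"
    proof -
      have "h *\<^sub>R \<Phi> x - h *\<^sub>R \<Psi> x = h *\<^sub>R (\<Phi> x - \<Psi> x)" by (simp add: scaleR_diff_right)
      then show ?thesis
        by (simp add: q_def PP bilinear_lmul[OF bil] bilinear_rmul[OF bil] power2_eq_square)
    qed
    have e2: "(norm (h *\<^sub>R \<Phi> x))^2 + (norm (h *\<^sub>R \<Psi> x))^2 = h^2 * s x"
      using h by (simp add: s_def PP power_mult_distrib algebra_simps)
    have "\<bar>w - h^2 * q x\<bar> \<le> E * (h^2 * s x)" using wb unfolding e1 e2 E_def .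
    then have "h^2 * (q x - E * s x) \<le> w \<and> w \<le> h^2 * (q x + E * s x)"
      by (simp add: algebra_simps abs_le_iff)
    then show ?thesis using w by blast
  qed
  define N where "N = (\<integral>\<^sup>+ x. e2ennreal (W (F x)) * indicator Oh x \<partial>lebesgue)"
  define lo where "lo x = indicator Oh x * (h^2 * (q x - E * s x))" for x
  define up where "up x = indicator Oh x * (h^2 * (q x + E * s x))" for x
  have lo_le: "ennreal (lo x) \<le> e2ennreal (W (F x)) * indicator Oh x" for x
  proof (cases "x \<in> Oh")
    case True
    then obtain w where "W (F x) = ereal w" "h^2 * (q x - E * s x) \<le> w" using pw by blast
    then show ?thesis using True by (simp add: lo_def ennreal_leI)
  qed (simp add: lo_def)
  have up_ge: "e2ennreal (W (F x)) * indicator Oh x \<le> ennreal (up x)" for x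
  proof (cases "x \<in> Oh")
    case True
    then obtain w where "W (F x) = ereal w" "w \<le> h^2 * (q x + E * s x)" using pw by blast
    then show ?thesis using True by (simp add: up_def ennreal_leI)
  qed (simp add: up_def)
  have up0: "up x \<ge> 0" for x
  proof (cases "x \<in> Oh")
    case True
    then obtain w where "W (F x) = ereal w" "w \<le> h^2 * (q x + E * s x)" using pw by blast
    moreover have "W (F x) \<ge> 0" by (rule W_nonneg)
    ultimately show ?thesis using True by (simp add: up_def)
  qed (simp add: up_def)
  have up_eq: "up = (\<lambda>x. h^2 * (indicator Oh x * q x) + (h^2 * E) * (indicator Oh x * s x))"
    by (auto simp: up_def algebra_simps)
  have lo_eq: "lo = (\<lambda>x. h^2 * (indicator Oh x * q x) - (h^2 * E) * (indicator Oh x * s x))"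
    by (auto simp: lo_def algebra_simps)
  have i1: "integrable lebesgue (\<lambda>x. h^2 * (indicator Oh x * q x))"
    using iOq by (rule Bochner_Integration.integrable_mult_right)
  have i2: "integrable lebesgue (\<lambda>x. (h^2 * E) * (indicator Oh x * s x))"
    using iOs by (rule Bochner_Integration.integrable_mult_right)
  have iup: "integrable lebesgue up"
    unfolding up_eq using i1 i2 by (rule Bochner_Integration.integrable_add)
  have ilo: "integrable lebesgue lo"
    unfolding lo_eq using i1 i2 by (rule Bochner_Integration.integrable_diff)
  have up_int: "(\<integral>x. up x \<partial>lebesgue) = h^2 * (Iq + E * Is)"
    unfolding up_eq Bochner_Integration.integral_add[OF i1 i2] Iq_def Is_def integral_mult_right_zero
    by (simp add: algebra_simps)
  have lo_int: "(\<integral>x. lo x \<partial>lebesgue) = h^2 * (Iq - E * Is)"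
    unfolding lo_eq Bochner_Integration.integral_diff[OF i1 i2] Iq_def Is_def integral_mult_right_zero
    by (simp add: algebra_simps)
  have N_up: "N \<le> ennreal (h^2 * (Iq + E * Is))"
  proof -
    have "N \<le> (\<integral>\<^sup>+ x. ennreal (up x) \<partial>lebesgue)" unfolding N_def
      by (rule nn_integral_mono) (rule up_ge)
    also have "\<dots> = ennreal (\<integral>x. up x \<partial>lebesgue)"
      by (rule nn_integral_eq_integral[OF iup]) (simp add: up0)
    finally show ?thesis using up_int by simp
  qed
  have N_lo: "ennreal (h^2 * (Iq - E * Is)) \<le> N"
  proof -
    have ilo': "integrable lebesgue (\<lambda>x. max 0 (lo x))"
      using ilo by (intro integrable_max) simp_all
    have "ennreal (\<integral>x. lo x \<partial>lebesgue) \<le> ennreal (\<integral>x. max 0 (lo x) \<partial>lebesgue)"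
      by (intro ennreal_leI integral_mono[OF ilo ilo']) simp
    also have "\<dots> = (\<integral>\<^sup>+ x. ennreal (max 0 (lo x)) \<partial>lebesgue)"
      by (rule nn_integral_eq_integral[OF ilo', symmetric]) simp
    also have "\<dots> = (\<integral>\<^sup>+ x. ennreal (lo x) \<partial>lebesgue)"
      by (rule nn_integral_cong) (simp add: ennreal_max_0)
    also have "\<dots> \<le> N" unfolding N_def
      by (rule nn_integral_mono) (rule lo_le)
    finally show ?thesis using lo_int by simp
  qed
  have upnn: "0 \<le> h^2 * (Iq + E * Is)"
    using up_int integral_nonneg_AE[of up lebesgue] up0 by simp
  have Ntop: "N \<noteq> top"
  proof
    assume "N = top"
    then have "top \<le> ennreal (h^2 * (Iq + E * Is))" using N_up by simp
    then show False by (simp add: top_unique)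
  qed
  obtain n where n: "N = ennreal n" "n \<ge> 0"
    using ennreal_cases[of N] Ntop by blast
  have n_up: "n \<le> h^2 * (Iq + E * Is)" using N_up n upnn by (simp add: ennreal_le_iff)
  have n_lo: "h^2 * (Iq - E * Is) \<le> n"
  proof (cases "h^2 * (Iq - E * Is) \<ge> 0")
    case True then show ?thesis using N_lo n by (simp add: ennreal_le_iff)
  next
    case False then show ?thesis using n by simp
  qed
  have h2: "h^2 > 0" using h by simp
  have "\<bar>n / h^2 - Iq\<bar> \<le> E * Is"
  proof -
    have "Iq - E * Is \<le> n / h^2" using n_lo h2 by (simp add: field_simps)
    moreover have "n / h^2 \<le> Iq + E * Is" using n_up h2 by (simp add: field_simps)
    ultimately show ?thesis by (simp add: abs_le_iff)
  qed
  also have "\<dots> \<le> E * (C1 + C2)" by (rule mult_left_mono[OF Is_le2 E0])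
  finally have fin: "\<bar>n / h^2 - Iq\<bar> \<le> E * (C1 + C2)" .
  have X: "ereal (1 / h^2) * enn2ereal N - ereal Iq = ereal (n / h^2 - Iq)"
    using n(2) unfolding n(1) by simp
  have Y: "\<bar>ereal (1 / h^2) * enn2ereal N - ereal Iq\<bar> \<le> ereal (E * (C1 + C2))"
    unfolding X using fin by simp
  have eqN: "(\<integral>\<^sup>+ x. e2ennreal (W ((mat 1 + h *\<^sub>R \<Phi> x) **
                 matrix_inv (mat 1 + h *\<^sub>R \<Psi> x))) * indicator Oh x \<partial>lebesgue) = N"
    unfolding N_def F_def by (rule refl)
  show ?thesis unfolding eqN Iq_eq using Y unfolding E_def .
qed

lemma O_props:
  fixes \<Omega> :: "(real^3) set" and \<Phi> \<Psi> :: "real^3 \<Rightarrow> real^3^3"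
  assumes \<Omega>_meas: "\<Omega> \<in> sets lebesgue" and \<Omega>_bdd: "bounded \<Omega>"
    and \<Phi>_meas: "(\<lambda>x. indicator \<Omega> x *\<^sub>R \<Phi> x) \<in> borel_measurable lebesgue"
    and \<Psi>_meas: "(\<lambda>x. indicator \<Omega> x *\<^sub>R \<Psi> x) \<in> borel_measurable lebesgue"
    and \<Phi>_bdd: "(\<integral>\<^sup>+ x. ennreal ((norm (\<Phi> x))^2) * indicator \<Omega> x \<partial>lebesgue) \<le> ennreal C1"
    and \<Psi>_bdd: "(\<integral>\<^sup>+ x. ennreal ((norm (\<Psi> x))^2) * indicator \<Omega> x \<partial>lebesgue) \<le> ennreal C2"
    and C1: "C1 \<ge> 0" and C2: "C2 \<ge> 0"
    and h: "h > 0" and d0: "0 < d"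
    and O_def: "Oh = {x\<in>\<Omega>. h^2 * ((norm (\<Phi> x))^2 + (norm (\<Psi> x))^2) \<le> d}"
  shows "Oh \<in> sets lebesgue" "measure lebesgue (\<Omega> - Oh) \<le> h^2 * (C1 + C2) / d"
proof -
  define P where "P x = indicator \<Omega> x *\<^sub>R \<Phi> x" for x
  define P' where "P' x = indicator \<Omega> x *\<^sub>R \<Psi> x" for x
  have Pm[measurable]: "P \<in> borel_measurable lebesgue" using \<Phi>_meas by (simp add: P_def[abs_def])
  have P'm[measurable]: "P' \<in> borel_measurable lebesgue" using \<Psi>_meas by (simp add: P'_def[abs_def])
  define s where "s x = (norm (P x))^2 + (norm (P' x))^2" for x
  have sm[measurable]: "s \<in> borel_measurable lebesgue" unfolding s_def[abs_def] by measurable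
  note LP = L2_integrable[OF Pm P_def \<Phi>_bdd C1]
  note LP' = L2_integrable[OF P'm P'_def \<Psi>_bdd C2]
  have is_: "integrable lebesgue s" unfolding s_def[abs_def] using LP(1) LP'(1) by (rule Bochner_Integration.integrable_add)
  have Is_le: "(\<integral>x. s x \<partial>lebesgue) \<le> C1 + C2"
    unfolding s_def[abs_def] using LP LP' by (simp add: Bochner_Integration.integral_add)
  have s0: "s x \<ge> 0" for x by (simp add: s_def)
  have O_eq: "Oh = \<Omega> \<inter> {x \<in> space lebesgue. h^2 * s x \<le> d}"
    unfolding O_def s_def P_def P'_def by (auto simp: indicator_def)
  show Om: "Oh \<in> sets lebesgue" unfolding O_eq using \<Omega>_meas by measurable
  define c where "c = d / h^2"
  have c0: "c > 0" using d0 h by (simp add: c_def)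
  define B where "B = {x \<in> space lebesgue. s x \<ge> c}"
  have Bm: "B \<in> sets lebesgue" unfolding B_def by measurable
  have BO: "B \<subseteq> \<Omega>"
  proof
    fix x assume "x \<in> B"
    then have "s x \<ge> c" by (simp add: B_def)
    then have "s x \<noteq> 0" using c0 by auto
    then show "x \<in> \<Omega>" by (auto simp: s_def P_def P'_def indicator_def split: if_splits)
  qed
  have \<Omega>f: "\<Omega> \<in> fmeasurable lebesgue" by (rule bounded_set_imp_lmeasurable[OF \<Omega>_bdd \<Omega>_meas])
  have Bf: "B \<in> fmeasurable lebesgue" by (rule fmeasurableI2[OF \<Omega>f BO Bm])
  have sub: "\<Omega> - Oh \<subseteq> B"
  proof
    fix x assume x: "x \<in> \<Omega> - Oh"
    then have "\<not> h^2 * s x \<le> d" unfolding O_eq by auto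
    then have "d \<le> h^2 * s x" by simp
    then have "c \<le> s x" using h by (simp add: c_def field_simps)
    then show "x \<in> B" by (simp add: B_def)
  qed
  have "measure lebesgue (\<Omega> - Oh) \<le> measure lebesgue B"
    by (rule measure_mono_fmeasurable[OF sub _ Bf]) (use \<Omega>_meas Om in auto)
  also have "\<dots> \<le> (\<integral>x. s x \<partial>lebesgue) / c"
    unfolding B_def by (rule integral_Markov_inequality_measure[OF is_ Om]) (use s0 c0 in auto)
  also have "\<dots> \<le> (C1 + C2) / c" by (rule divide_right_mono[OF Is_le]) (use c0 in simp)
  also have "\<dots> = h^2 * (C1 + C2) / d" using h d0 by (simp add: c_def field_simps)
  finally show "measure lebesgue (\<Omega> - Oh) \<le> h^2 * (C1 + C2) / d" .
qed

theorem mainTheorem10: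
  fixes W :: "real^3^3 \<Rightarrow> ereal"
    and Q :: "real^3^3 \<Rightarrow> real"
    and r :: "real \<Rightarrow> ereal"
    and \<Omega> :: "(real^3) set"
    and \<Phi> \<Psi> :: "real \<Rightarrow> real^3 \<Rightarrow> real^3^3"
    and \<kappa> :: "real \<Rightarrow> real"
  assumes W_nonneg: "\<And>F. W F \<ge> 0"
    and Q_quad: "quadratic_form Q"
    and r_nonneg: "\<And>\<delta>. \<delta> \<ge> 0 \<Longrightarrow> r \<delta> \<ge> 0"
    and r_mono: "mono_on {0..} r"
    and r_lim: "(r \<longlongrightarrow> 0) (at_right 0)"
    and W_Q: "\<And>G. \<bar>W (mat 1 + G) - ereal (Q G)\<bar> \<le> ereal ((norm G)^2) * r (norm G)"
    and \<Omega>_meas: "\<Omega> \<in> sets lebesgue"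
    and \<Omega>_bdd: "bounded \<Omega>"
    and \<Phi>_meas: "\<And>h. h > 0 \<Longrightarrow> (\<lambda>x. indicator \<Omega> x *\<^sub>R \<Phi> h x) \<in> borel_measurable lebesgue"
    and \<Psi>_meas: "\<And>h. h > 0 \<Longrightarrow> (\<lambda>x. indicator \<Omega> x *\<^sub>R \<Psi> h x) \<in> borel_measurable lebesgue"
    and \<Phi>_bdd: "\<exists>C. \<forall>h>0. (\<integral>\<^sup>+ x. ennreal ((norm (\<Phi> h x))^2) * indicator \<Omega> x \<partial>lebesgue) \<le> ennreal C"
    and \<Psi>_bdd: "\<exists>C. \<forall>h>0. (\<integral>\<^sup>+ x. ennreal ((norm (\<Psi> h x))^2) * indicator \<Omega> x \<partial>lebesgue) \<le> ennreal C"
    and \<kappa>_pos: "\<And>h. h > 0 \<Longrightarrow> \<kappa> h > 0"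
    and \<kappa>_lim: "(\<kappa> \<longlongrightarrow> 0) (at_right 0)"
  shows "\<exists>Oh :: real \<Rightarrow> (real^3) set.
           (\<forall>h>0. Oh h \<in> sets lebesgue \<and> Oh h \<subseteq> \<Omega> \<and>
                   (\<forall>x\<in>Oh h. det (mat 1 + h *\<^sub>R \<Psi> h x) > 0))
         \<and> ((\<lambda>h. measure lebesgue (\<Omega> - Oh h)) \<longlongrightarrow> 0) (at_right 0)
         \<and> ((\<lambda>h. \<kappa> h / h^2 * measure lebesgue (\<Omega> - Oh h)) \<longlongrightarrow> 0) (at_right 0)
         \<and> ((\<lambda>h. \<bar>ereal (1 / h^2) *
                   enn2ereal (\<integral>\<^sup>+ x. e2ennreal (W ((mat 1 + h *\<^sub>R \<Phi> h x) **
                                   matrix_inv (mat 1 + h *\<^sub>R \<Psi> h x))) * indicator (Oh h) x \<partial>lebesgue)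
                 - ereal (\<integral>x\<in>Oh h. Q (\<Phi> h x - \<Psi> h x) \<partial>lebesgue)\<bar>) \<longlongrightarrow> 0) (at_right 0)"
proof -
  obtain Bf where bil: "bilinear Bf" and QB: "\<forall>G. Q G = Bf G G"
    using Q_quad unfolding quadratic_form_def by blast
  have Qeq: "Q = (\<lambda>G. Bf G G)" using QB by auto
  obtain K where K0: "K > 0" and K: "\<forall>x y. norm (Bf x y) \<le> K * norm x * norm y"
    using bilinear_bounded_pos[OF bil] by blast
  have K': "\<And>x y. norm (Bf x y) \<le> K * norm x * norm y" using K by blast
  obtain C1' where C1': "\<forall>h>0. (\<integral>\<^sup>+ x. ennreal ((norm (\<Phi> h x))^2) * indicator \<Omega> x \<partial>lebesgue) \<le> ennreal C1'"
    using \<Phi>_bdd by blast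
  obtain C2' where C2': "\<forall>h>0. (\<integral>\<^sup>+ x. ennreal ((norm (\<Psi> h x))^2) * indicator \<Omega> x \<partial>lebesgue) \<le> ennreal C2'"
    using \<Psi>_bdd by blast
  define C1 where "C1 = max C1' 0"
  define C2 where "C2 = max C2' 0"
  have C1_0: "C1 \<ge> 0" and C2_0: "C2 \<ge> 0" by (simp_all add: C1_def C2_def)
  have C1b: "(\<integral>\<^sup>+ x. ennreal ((norm (\<Phi> h x))^2) * indicator \<Omega> x \<partial>lebesgue) \<le> ennreal C1" if "h > 0" for h
  proof -
    have "ennreal C1' \<le> ennreal C1" by (rule ennreal_leI) (simp add: C1_def)
    then show ?thesis using C1' that by (meson order_trans)
  qed
  have C2b: "(\<integral>\<^sup>+ x. ennreal ((norm (\<Psi> h x))^2) * indicator \<Omega> x \<partial>lebesgue) \<le> ennreal C2" if "h > 0" for h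
  proof -
    have "ennreal C2' \<le> ennreal C2" by (rule ennreal_leI) (simp add: C2_def)
    then show ?thesis using C2' that by (meson order_trans)
  qed
  define C where "C = C1 + C2"
  have C0: "C \<ge> 0" using C1_0 C2_0 by (simp add: C_def)
  have W_Q': "\<And>G. \<bar>W (mat 1 + G) - ereal (Bf G G)\<bar> \<le> ereal ((norm G)^2) * r (norm G)"
    using W_Q unfolding Qeq .
  define d where "d h = min (1/4) (sqrt (\<kappa> h) + h)" for h :: real
  define Oh where "Oh h = {x\<in>\<Omega>. h^2 * ((norm (\<Phi> h x))^2 + (norm (\<Psi> h x))^2) \<le> d h}" for h
  have d0: "d h > 0" if "h > 0" for h
  proof -
    have "sqrt (\<kappa> h) > 0" using \<kappa>_pos[OF that] by simp
    from add_pos_pos[OF this that] show ?thesis unfolding d_def min_def by auto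
  qed
  have d4: "d h \<le> 1/4" for h unfolding d_def by (rule min.cobounded1)
  have part1: "\<forall>h>0. Oh h \<in> sets lebesgue \<and> Oh h \<subseteq> \<Omega> \<and>
                   (\<forall>x\<in>Oh h. det (mat 1 + h *\<^sub>R \<Psi> h x) > 0)"
  proof (intro allI impI conjI ballI)
    fix h :: real assume h: "h > 0"
    show "Oh h \<in> sets lebesgue"
      by (rule O_props(1)[OF \<Omega>_meas \<Omega>_bdd \<Phi>_meas[OF h] \<Psi>_meas[OF h] C1b[OF h] C2b[OF h] C1_0 C2_0 h d0[OF h] Oh_def[of h]])
    show "Oh h \<subseteq> \<Omega>" by (auto simp: Oh_def)
    fix x assume x: "x \<in> Oh h"
    then have hx: "h^2 * ((norm (\<Phi> h x))^2 + (norm (\<Psi> h x))^2) \<le> d h" by (simp add: Oh_def)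
    have nn: "h^2 * (norm (\<Phi> h x))^2 \<ge> 0" by simp
    have "h^2 * (norm (\<Psi> h x))^2 \<le> 1/4" using hx d4[of h] nn unfolding distrib_left by linarith
    moreover have "(norm (h *\<^sub>R \<Psi> h x))^2 = h^2 * (norm (\<Psi> h x))^2" using h by (simp add: power_mult_distrib)
    moreover have "(1/2::real)^2 = 1/4" by (simp add: power2_eq_square)
    ultimately have "(norm (h *\<^sub>R \<Psi> h x))^2 \<le> (1/2)^2" by simp
    then have "norm (h *\<^sub>R \<Psi> h x) \<le> 1/2" by (rule power2_le_imp_le) simp
    then show "det (mat 1 + h *\<^sub>R \<Psi> h x) > 0" by (intro det_I_plus_pos) simp
  qed
  have ev0: "eventually (\<lambda>h. h > 0) (at_right (0::real))" by (rule eventually_at_right_less)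
  have lim_sum: "((\<lambda>h. sqrt (\<kappa> h) + h) \<longlongrightarrow> 0) (at_right 0)"
    using tendsto_add[OF tendsto_real_sqrt[OF \<kappa>_lim] tendsto_ident_at[of 0 "{0<..}"]] by simp
  have "eventually (\<lambda>h. sqrt (\<kappa> h) + h < 1/4) (at_right 0)"
    using lim_sum by (rule order_tendstoD) simp
  then have ev_d: "eventually (\<lambda>h. d h = sqrt (\<kappa> h) + h) (at_right 0)"
    by (rule eventually_mono) (simp add: d_def)
  have d_lim: "((\<lambda>h. d h) \<longlongrightarrow> 0) (at_right 0)"
    using lim_sum tendsto_cong[OF ev_d] by simp
  have meas_le: "measure lebesgue (\<Omega> - Oh h) \<le> h^2 * C / d h" if h: "h > 0" for h
    using O_props(2)[OF \<Omega>_meas \<Omega>_bdd \<Phi>_meas[OF h] \<Psi>_meas[OF h] C1b[OF h] C2b[OF h] C1_0 C2_0 h d0[OF h] Oh_def[of h]]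
    by (simp add: C_def)
  have part2: "((\<lambda>h. measure lebesgue (\<Omega> - Oh h)) \<longlongrightarrow> 0) (at_right 0)"
  proof (rule tendsto_sandwich[where f="\<lambda>_. 0" and h="\<lambda>h. h * C"])
    show "eventually (\<lambda>h. 0 \<le> measure lebesgue (\<Omega> - Oh h)) (at_right 0)" by simp
    show "eventually (\<lambda>h. measure lebesgue (\<Omega> - Oh h) \<le> h * C) (at_right 0)"
      using ev0 ev_d
    proof eventually_elim
      case (elim h)
      have "h \<le> d h" using elim \<kappa>_pos[of h] by simp
      have "measure lebesgue (\<Omega> - Oh h) \<le> h^2 * C / d h" using meas_le[OF elim(1)] .
      also have "\<dots> \<le> h^2 * C / h"
      proof -
        have dpos: "0 < d h * h" using d0[OF elim(1)] elim(1) by simp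
        have "0 \<le> h^2 * C" using C0 by simp
        then show ?thesis by (rule divide_left_mono[OF \<open>h \<le> d h\<close> _ dpos])
      qed
      also have "\<dots> = h * C" using elim by (simp add: power2_eq_square)
      finally show ?case .
    qed
    show "((\<lambda>_. 0) \<longlongrightarrow> (0::real)) (at_right 0)" by simp
    show "((\<lambda>h. h * C) \<longlongrightarrow> 0) (at_right 0)"
      using tendsto_mult[OF tendsto_ident_at[of 0 "{0<..}"] tendsto_const[of C]] by simp
  qed
  have part3: "((\<lambda>h. \<kappa> h / h^2 * measure lebesgue (\<Omega> - Oh h)) \<longlongrightarrow> 0) (at_right 0)"
  proof (rule tendsto_sandwich[where f="\<lambda>_. 0" and h="\<lambda>h. sqrt (\<kappa> h) * C"])
    show "eventually (\<lambda>h. 0 \<le> \<kappa> h / h^2 * measure lebesgue (\<Omega> - Oh h)) (at_right 0)"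
      using ev0
    proof (rule eventually_mono)
      fix h :: real assume "0 < h"
      then have "0 \<le> \<kappa> h / h^2" using \<kappa>_pos[of h] by simp
      then show "0 \<le> \<kappa> h / h^2 * measure lebesgue (\<Omega> - Oh h)"
        by (rule mult_nonneg_nonneg) (rule measure_nonneg)
    qed
    show "eventually (\<lambda>h. \<kappa> h / h^2 * measure lebesgue (\<Omega> - Oh h) \<le> sqrt (\<kappa> h) * C) (at_right 0)"
      using ev0 ev_d
    proof eventually_elim
      case (elim h)
      have k0: "\<kappa> h > 0" using \<kappa>_pos elim by simp
      have sk: "sqrt (\<kappa> h) \<le> d h" using elim by simp
      have "\<kappa> h / h^2 * measure lebesgue (\<Omega> - Oh h) \<le> \<kappa> h / h^2 * (h^2 * C / d h)"
        by (rule mult_left_mono[OF meas_le[OF elim(1)]]) (use elim k0 in auto)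
      also have "\<dots> = \<kappa> h * C / d h" using elim by (simp add: field_simps)
      also have "\<dots> \<le> \<kappa> h * C / sqrt (\<kappa> h)"
      proof -
        have dpos: "0 < d h * sqrt (\<kappa> h)" using d0[OF elim(1)] k0 by simp
        have "0 \<le> \<kappa> h * C" using C0 k0 by simp
        then show ?thesis by (rule divide_left_mono[OF sk _ dpos])
      qed
      also have "\<dots> = sqrt (\<kappa> h) * C" using k0 by (simp add: real_div_sqrt field_simps)
      finally show ?case .
    qed
    show "((\<lambda>_. 0) \<longlongrightarrow> (0::real)) (at_right 0)" by simp
    show "((\<lambda>h. sqrt (\<kappa> h) * C) \<longlongrightarrow> 0) (at_right 0)"
      using tendsto_mult[OF tendsto_real_sqrt[OF \<kappa>_lim] tendsto_const[of C]] by simp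
  qed
  define \<rho> where "\<rho> h = real_of_ereal (r (6 * sqrt (d h)))" for h
  have sd_lim: "((\<lambda>h. 6 * sqrt (d h)) \<longlongrightarrow> 0) (at_right 0)"
    using tendsto_mult[OF tendsto_const[of 6] tendsto_real_sqrt[OF d_lim]] by simp
  have "filterlim (\<lambda>h. 6 * sqrt (d h)) (at_right 0) (at_right 0)"
    by (rule tendsto_imp_filterlim_at_right[OF sd_lim])
       (use ev0 in \<open>auto elim!: eventually_mono intro: d0\<close>)
  from filterlim_compose[OF r_lim this]
  have r_lim2: "((\<lambda>h. r (6 * sqrt (d h))) \<longlongrightarrow> 0) (at_right 0)" .
  have "eventually (\<lambda>h. r (6 * sqrt (d h)) < 1) (at_right 0)"
    using r_lim2 by (rule order_tendstoD) simp
  then have ev_fin: "eventually (\<lambda>h. r (6 * sqrt (d h)) = ereal (\<rho> h) \<and> \<rho> h \<ge> 0) (at_right 0)"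
    using ev0
  proof eventually_elim
    case (elim h)
    have "r (6 * sqrt (d h)) \<ge> 0" using r_nonneg d0[of h] elim by simp
    with elim have "\<bar>r (6 * sqrt (d h))\<bar> \<noteq> \<infinity>" by auto
    then have "r (6 * sqrt (d h)) = ereal (\<rho> h)" unfolding \<rho>_def by (simp add: ereal_real)
    with \<open>r (6 * sqrt (d h)) \<ge> 0\<close> show ?case by simp
  qed
  have "((\<lambda>h. ereal (\<rho> h)) \<longlongrightarrow> ereal 0) (at_right 0)"
    using r_lim2 tendsto_cong[of "\<lambda>h. r (6 * sqrt (d h))" "\<lambda>h. ereal (\<rho> h)"] ev_fin
    by (simp add: zero_ereal_def eventually_mono)
  then have rho_lim: "(\<rho> \<longlongrightarrow> 0) (at_right 0)" by simp
  define U where "U h = 32 * (\<rho> h + K * sqrt (d h)) * C" for h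
  have U_lim: "((\<lambda>h. U h) \<longlongrightarrow> 0) (at_right 0)"
    unfolding U_def using rho_lim d_lim by (auto intro!: tendsto_eq_intros)
  have UE_lim: "((\<lambda>h. ereal (U h)) \<longlongrightarrow> 0) (at_right 0)"
    using U_lim by (simp add: zero_ereal_def)
  show ?thesis
  proof (intro exI[of _ Oh] conjI)
    show "\<forall>h>0. Oh h \<in> sets lebesgue \<and> Oh h \<subseteq> \<Omega> \<and> (\<forall>x\<in>Oh h. 0 < det (mat 1 + h *\<^sub>R \<Psi> h x))"
      using part1 by blast
    show "((\<lambda>h. measure lebesgue (\<Omega> - Oh h)) \<longlongrightarrow> 0) (at_right 0)" by (rule part2)
    show "((\<lambda>h. \<kappa> h / h^2 * measure lebesgue (\<Omega> - Oh h)) \<longlongrightarrow> 0) (at_right 0)" by (rule part3)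
    show "((\<lambda>h. \<bar>ereal (1 / h^2) *
                   enn2ereal (\<integral>\<^sup>+ x. e2ennreal (W ((mat 1 + h *\<^sub>R \<Phi> h x) **
                                   matrix_inv (mat 1 + h *\<^sub>R \<Psi> h x))) * indicator (Oh h) x \<partial>lebesgue)
                 - ereal (\<integral>x\<in>Oh h. Q (\<Phi> h x - \<Psi> h x) \<partial>lebesgue)\<bar>) \<longlongrightarrow> 0) (at_right 0)"
      unfolding Qeq
    proof (rule tendsto_sandwich[OF _ _ tendsto_const UE_lim])
      show "eventually (\<lambda>h. 0 \<le> \<bar>ereal (1 / h^2) *
                   enn2ereal (\<integral>\<^sup>+ x. e2ennreal (W ((mat 1 + h *\<^sub>R \<Phi> h x) **
                                   matrix_inv (mat 1 + h *\<^sub>R \<Psi> h x))) * indicator (Oh h) x \<partial>lebesgue)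
                 - ereal (\<integral>x\<in>Oh h. Bf (\<Phi> h x - \<Psi> h x) (\<Phi> h x - \<Psi> h x) \<partial>lebesgue)\<bar>) (at_right 0)"
        by (intro always_eventually allI abs_ereal_pos)
      show "eventually (\<lambda>h. \<bar>ereal (1 / h^2) *
                   enn2ereal (\<integral>\<^sup>+ x. e2ennreal (W ((mat 1 + h *\<^sub>R \<Phi> h x) **
                                   matrix_inv (mat 1 + h *\<^sub>R \<Psi> h x))) * indicator (Oh h) x \<partial>lebesgue)
                 - ereal (\<integral>x\<in>Oh h. Bf (\<Phi> h x - \<Psi> h x) (\<Phi> h x - \<Psi> h x) \<partial>lebesgue)\<bar> \<le> ereal (U h)) (at_right 0)"
        using ev0 ev_fin
      proof eventually_elim
        case (elim h)
        then have h: "h > 0" and rho: "r (6 * sqrt (d h)) = ereal (\<rho> h)" and rho0: "\<rho> h \<ge> 0" by auto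
        show ?case unfolding U_def C_def
          by (rule fixed_h[OF W_nonneg r_mono W_Q' bil K' K0 \<Omega>_meas \<Phi>_meas[OF h] \<Psi>_meas[OF h]
              C1b[OF h] C2b[OF h] C1_0 C2_0 h d0[OF h] d4 rho rho0 Oh_def[of h]])
      qed
    qed
  qed
qed

end
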